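(* Let $\alpha\neq 0$ and let $\Sigma_1$ and $\Sigma_2$ be two $\alpha$-singular maximal surfaces. If $\Sigma_1$ and $\Sigma_2$ have a common tangent interior point $p$ and $\Sigma_1$ lies above $\Sigma_2$ around $p$, then $\Sigma_1$ and $\Sigma_2$ coincide in an open set around $p$.
   Context: $\mathbb L^3$ is $\mathbb R^3$ with the metric $dx^2+dy^2-dz^2$. An $\alpha$-singular maximal surface is a spacelike surface (Riemannian induced metric, timelike unit normal $N$) in the halfspace $z>0$ satisfying $H(p)=-\alpha\frac{\langle N(p),(0,0,1)\rangle}{z}$, where $H$ is the trace of the second fundamental form; locally it is a graph $z=u(x,y)$ with $|Du|<1$ solving $\mathrm{div}\frac{Du}{\sqrt{1-|Du|^2}}=\frac{\alpha}{u\sqrt{1-|Du|^2}}$. "Above" refers to the $z$-direction. *)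

theory Defs
  imports "HOL-Analysis.Analysis"
begin

text \<open>A point of the (x,y)-plane is a pair in real * real; a piece of spacelike
surface is a graph z = u(x,y) over an open set Omega.\<close>

definition is_gradient_on ::
  "(real \<times> real) set \<Rightarrow> (real \<times> real \<Rightarrow> real) \<Rightarrow> (real \<times> real \<Rightarrow> real \<times> real) \<Rightarrow> bool" where
  "is_gradient_on \<Omega> u g \<longleftrightarrow> (\<forall>p\<in>\<Omega>. (u has_derivative (\<lambda>h. g p \<bullet> h)) (at p))"

definition divergence :: "(real \<times> real \<Rightarrow> real \<times> real) \<Rightarrow> real \<times> real \<Rightarrow> real" where
  "divergence V p = (let D = (SOME D. (V has_derivative D) (at p)) in
       fst (D (1, 0)) + snd (D (0, 1)))"

definition alpha_singular_maximal_graph ::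
  "real \<Rightarrow> (real \<times> real) set \<Rightarrow> (real \<times> real \<Rightarrow> real) \<Rightarrow> bool" where
  "alpha_singular_maximal_graph \<alpha> \<Omega> u \<longleftrightarrow>
     open \<Omega> \<and>
     (\<exists>g D2. is_gradient_on \<Omega> u g \<and>
        (\<forall>p\<in>\<Omega>. (g has_derivative D2 p) (at p)) \<and>
        (\<forall>v. continuous_on \<Omega> (\<lambda>p. D2 p v)) \<and>
        (\<forall>p\<in>\<Omega>. u p > 0) \<and>
        (\<forall>p\<in>\<Omega>. norm (g p) < 1) \<and>
        (\<forall>p\<in>\<Omega>. divergence (\<lambda>q. (1 / sqrt (1 - (norm (g q))\<^sup>2)) *\<^sub>R g q) p
                   = \<alpha> / (u p * sqrt (1 - (norm (g p))\<^sup>2))))"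

end

theory Submission
  imports Defs
begin

definition trX :: "(real \<times> real \<Rightarrow> real \<times> real) \<Rightarrow> real" where
  "trX X = fst (X (1,0)) + snd (X (0,1))"
definition EE :: "real \<times> real \<Rightarrow> (real \<times> real \<Rightarrow> real \<times> real) \<Rightarrow> real" where
  "EE P X = (1 - P \<bullet> P) * trX X + P \<bullet> X P"


lemma EE_lin: "EE P (\<lambda>h. X1 h - X2 h - \<epsilon> *\<^sub>R X3 h) = EE P X1 - EE P X2 - \<epsilon> * EE P X3"
  unfolding EE_def trX_def by (simp add: inner_diff_right algebra_simps)

lemma EE_psd:
  assumes "\<And>h. Y h \<bullet> h \<ge> 0" "P \<bullet> P \<le> 1"
  shows "EE P Y \<ge> 0"
proof -
  have "fst (Y (1,0)) = Y (1,0) \<bullet> (1,0)" "snd (Y (0,1)) = Y (0,1) \<bullet> (0,1)"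
    by (cases "Y (1,0)"; simp) (cases "Y (0,1)"; simp)
  then have "trX Y \<ge> 0" unfolding trX_def using assms(1)[of "(1,0)"] assms(1)[of "(0,1)"] by simp
  moreover have "P \<bullet> Y P \<ge> 0" using assms(1)[of P] by (simp add: inner_commute)
  ultimately show ?thesis unfolding EE_def using assms(2) by simp
qed

lemma EE_Xv:
  fixes zz P :: "real \<times> real"
  assumes "1 - P \<bullet> P \<ge> \<theta>" "\<theta> > 0" "e > 0" "lam > 0" "P \<bullet> P \<ge> 0"
  shows "EE P (\<lambda>h. (-2*lam*e) *\<^sub>R h + (4*lam^2*e*(zz \<bullet> h)) *\<^sub>R zz) \<ge> 4*lam*e*(lam*\<theta>*(zz \<bullet> zz) - 1)"
proof -
  have tr: "trX (\<lambda>h. (-2*lam*e) *\<^sub>R h + (4*lam^2*e*(zz \<bullet> h)) *\<^sub>R zz) = -4*lam*e + 4*lam^2*e*(zz \<bullet> zz)"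
    unfolding trX_def by (cases zz) (simp add: algebra_simps power2_eq_square)
  have q: "P \<bullet> ((-2*lam*e) *\<^sub>R P + (4*lam^2*e*(zz \<bullet> P)) *\<^sub>R zz) = -2*lam*e*(P \<bullet> P) + 4*lam^2*e*(zz \<bullet> P)^2"
    by (simp add: inner_add_right inner_commute power2_eq_square algebra_simps)
  have z: "zz \<bullet> zz \<ge> 0" by simp
  have "(1 - P \<bullet> P) * (4*lam^2*e*(zz \<bullet> zz)) \<ge> \<theta> * (4*lam^2*e*(zz \<bullet> zz))"
    using assms z by (intro mult_right_mono) auto
  moreover have "4*lam^2*e*(zz \<bullet> P)^2 \<ge> 0" using assms by simp
  moreover have "2*lam*e*(P \<bullet> P) \<ge> 0" using assms by simp
  ultimately show ?thesis unfolding EE_def tr q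
    by (simp add: algebra_simps power2_eq_square)
qed


lemma EE_comp:
  assumes "linear X"
  shows "EE P X = (fst (X (1,0)) + snd (X (0,1))) - (fst P)^2 * snd (X (0,1)) - (snd P)^2 * fst (X (1,0))
     + fst P * snd P * (snd (X (1,0)) + fst (X (0,1)))"
proof -
  have Ps: "P = fst P *\<^sub>R (1,0) + snd P *\<^sub>R (0,1)" by (cases P) simp
  have XP: "X P = fst P *\<^sub>R X (1,0) + snd P *\<^sub>R X (0,1)"
  proof -
    have "X (fst P *\<^sub>R (1,0) + snd P *\<^sub>R (0,1)) = fst P *\<^sub>R X (1,0) + snd P *\<^sub>R X (0,1)"
      by (simp only: linear_add[OF assms] linear_cmul[OF assms])
    then show ?thesis using Ps by metis
  qed
  show ?thesis unfolding EE_def trX_def XP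
    by (cases P; cases "X (1,0)"; cases "X (0,1)") (simp add: algebra_simps power2_eq_square)
qed

lemma diff_sq_bound:
  fixes p q nd :: real
  assumes "\<bar>p - q\<bar> \<le> nd" "\<bar>p\<bar> \<le> 1" "\<bar>q\<bar> \<le> 1"
  shows "\<bar>p^2 - q^2\<bar> \<le> 2 * nd"
proof -
  have "\<bar>p^2 - q^2\<bar> = \<bar>p - q\<bar> * \<bar>p + q\<bar>" by (simp add: power2_eq_square algebra_simps abs_mult[symmetric])
  also have "\<dots> \<le> nd * 2" using assms by (intro mult_mono) auto
  finally show ?thesis by simp
qed

lemma diff_prod_bound:
  fixes p1 p2 q1 q2 nd :: real
  assumes "\<bar>p1 - q1\<bar> \<le> nd" "\<bar>p2 - q2\<bar> \<le> nd" "\<bar>p1\<bar> \<le> 1" "\<bar>q2\<bar> \<le> 1"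
  shows "\<bar>p1 * p2 - q1 * q2\<bar> \<le> 2 * nd"
proof -
  have "p1 * p2 - q1 * q2 = p1 * (p2 - q2) + (p1 - q1) * q2" by (simp add: algebra_simps)
  then have "\<bar>p1 * p2 - q1 * q2\<bar> \<le> \<bar>p1\<bar> * \<bar>p2 - q2\<bar> + \<bar>p1 - q1\<bar> * \<bar>q2\<bar>"
    by (metis abs_mult abs_triangle_ineq)
  also have "\<dots> \<le> 1 * nd + nd * 1" using assms by (intro add_mono mult_mono) auto
  finally show ?thesis by simp
qed

lemma fst_le_norm: "\<bar>fst (x::real \<times> real)\<bar> \<le> norm x"
proof -
  have "\<bar>fst x\<bar> = sqrt ((fst x)^2)" by simp
  also have "\<dots> \<le> sqrt ((fst x)^2 + (snd x)^2)" by (intro real_sqrt_le_mono) simp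
  finally show ?thesis by (cases x) (simp add: norm_Pair)
qed

lemma snd_le_norm: "\<bar>snd (x::real \<times> real)\<bar> \<le> norm x"
proof -
  have "\<bar>snd x\<bar> = sqrt ((snd x)^2)" by simp
  also have "\<dots> \<le> sqrt ((fst x)^2 + (snd x)^2)" by (intro real_sqrt_le_mono) simp
  finally show ?thesis by (cases x) (simp add: norm_Pair)
qed

lemma EE_diff:
  assumes "linear X" "\<bar>fst (X (1,0))\<bar> \<le> M" "\<bar>snd (X (1,0))\<bar> \<le> M" "\<bar>fst (X (0,1))\<bar> \<le> M" "\<bar>snd (X (0,1))\<bar> \<le> M"
    "norm P \<le> 1" "norm G \<le> 1"
  shows "\<bar>EE P X - EE G X\<bar> \<le> 8 * M * norm (P - G)"
proof -
  define nd where "nd = norm (P - G)"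
  have b1: "\<bar>fst P - fst G\<bar> \<le> nd" "\<bar>snd P - snd G\<bar> \<le> nd"
    unfolding nd_def using fst_le_norm[of "P - G"] snd_le_norm[of "P - G"] by auto
  have b2: "\<bar>fst P\<bar> \<le> 1" "\<bar>snd P\<bar> \<le> 1" "\<bar>fst G\<bar> \<le> 1" "\<bar>snd G\<bar> \<le> 1"
    using fst_le_norm[of P] snd_le_norm[of P] fst_le_norm[of G] snd_le_norm[of G] assms(6,7) by auto
  have s1: "\<bar>(fst P)^2 - (fst G)^2\<bar> \<le> 2 * nd" using diff_sq_bound b1 b2 by blast
  have s2: "\<bar>(snd P)^2 - (snd G)^2\<bar> \<le> 2 * nd" using diff_sq_bound b1 b2 by blast
  have s3: "\<bar>fst P * snd P - fst G * snd G\<bar> \<le> 2 * nd" using diff_prod_bound b1 b2 by blast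
  define a where "a = fst (X (1,0))"
  define b where "b = snd (X (1,0))"
  define c where "c = fst (X (0,1))"
  define d where "d = snd (X (0,1))"
  have M: "\<bar>a\<bar> \<le> M" "\<bar>b\<bar> \<le> M" "\<bar>c\<bar> \<le> M" "\<bar>d\<bar> \<le> M" using assms unfolding a_def b_def c_def d_def by auto
  have eq: "EE P X - EE G X = - ((fst P)^2 - (fst G)^2) * d - ((snd P)^2 - (snd G)^2) * a
      + (fst P * snd P - fst G * snd G) * (b + c)"
    unfolding EE_comp[OF assms(1)] a_def b_def c_def d_def by (simp add: algebra_simps)
  have "\<bar>EE P X - EE G X\<bar> \<le> \<bar>(fst P)^2 - (fst G)^2\<bar> * \<bar>d\<bar> + \<bar>(snd P)^2 - (snd G)^2\<bar> * \<bar>a\<bar>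
      + \<bar>fst P * snd P - fst G * snd G\<bar> * \<bar>b + c\<bar>"
  proof -
    have t: "\<And>x y z :: real. \<bar>- x - y + z\<bar> \<le> \<bar>x\<bar> + \<bar>y\<bar> + \<bar>z\<bar>" by linarith
    show ?thesis unfolding eq abs_mult[symmetric] mult_minus_left by (rule t)
  qed
  also have "\<dots> \<le> (2*nd) * M + (2*nd) * M + (2*nd) * (2*M)"
  proof -
    have "\<bar>b + c\<bar> \<le> 2 * M" using M by linarith
    then show ?thesis using s1 s2 s3 M by (intro add_mono mult_mono) auto
  qed
  finally show ?thesis unfolding nd_def by simp
qed


lemma rhs_bound:
  fixes P G :: "real \<times> real"
  assumes "m > 0" "u1 \<ge> m" "u2 \<ge> m" "0 \<le> u1 - u2" "u1 - u2 \<le> w" "norm P \<le> 1" "norm G \<le> 1" "P \<bullet> P \<le> 1"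
  shows "\<alpha> * (1 - P \<bullet> P) / u1 - \<alpha> * (1 - G \<bullet> G) / u2 \<le> \<bar>\<alpha>\<bar> * (w / m^2 + 2 * norm (P - G) / m)"
proof -
  have u: "u1 > 0" "u2 > 0" using assms by auto
  have split: "(1 - P \<bullet> P) / u1 - (1 - G \<bullet> G) / u2 = (1 - P \<bullet> P) * (u2 - u1) / (u1 * u2) + (G \<bullet> G - P \<bullet> P) / u2"
    using u by (simp add: field_simps)
  have a1: "\<bar>(1 - P \<bullet> P) * (u2 - u1) / (u1 * u2)\<bar> \<le> w / m^2"
  proof -
    have "\<bar>(1 - P \<bullet> P) * (u2 - u1)\<bar> \<le> 1 * w"
      unfolding abs_mult using assms by (intro mult_mono) (auto simp: inner_ge_zero)
    moreover have "m^2 \<le> u1 * u2" using assms by (simp add: power2_eq_square mult_mono)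
    ultimately have "\<bar>(1 - P \<bullet> P) * (u2 - u1)\<bar> / (u1 * u2) \<le> w / m^2"
      using u assms by (intro frac_le) auto
    then show ?thesis using u by (simp add: abs_divide abs_mult)
  qed
  have a2: "\<bar>(G \<bullet> G - P \<bullet> P) / u2\<bar> \<le> 2 * norm (P - G) / m"
  proof -
    have "G \<bullet> G - P \<bullet> P = (G - P) \<bullet> (G + P)" by (simp add: algebra_simps inner_commute)
    then have "\<bar>G \<bullet> G - P \<bullet> P\<bar> \<le> norm (G - P) * norm (G + P)" by (metis Cauchy_Schwarz_ineq2)
    also have "\<dots> \<le> norm (P - G) * 2"
      using assms norm_triangle_ineq[of G P] by (simp only: norm_minus_commute[of G P]) (intro mult_left_mono, auto)
    finally have "\<bar>G \<bullet> G - P \<bullet> P\<bar> \<le> 2 * norm (P - G)" by simp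
    then show ?thesis using u assms by (simp add: abs_divide) (intro frac_le, auto)
  qed
  have "\<alpha> * (1 - P \<bullet> P) / u1 - \<alpha> * (1 - G \<bullet> G) / u2 = \<alpha> * ((1 - P \<bullet> P) / u1 - (1 - G \<bullet> G) / u2)"
    by (simp add: algebra_simps)
  also have "\<dots> \<le> \<bar>\<alpha>\<bar> * \<bar>(1 - P \<bullet> P) / u1 - (1 - G \<bullet> G) / u2\<bar>"
    by (metis abs_ge_self abs_mult)
  also have "\<dots> \<le> \<bar>\<alpha>\<bar> * (w / m^2 + 2 * norm (P - G) / m)"
    unfolding split using a1 a2 abs_triangle_ineq[of "(1 - P \<bullet> P) * (u2 - u1) / (u1 * u2)" "(G \<bullet> G - P \<bullet> P) / u2"]
    by (intro mult_left_mono) auto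
  finally show ?thesis .
qed


lemma key:
  fixes P G zz :: "real \<times> real" and X1 X2 :: "real \<times> real \<Rightarrow> real \<times> real"
  assumes e1: "EE P X1 = \<alpha> * (1 - P \<bullet> P) / u1" and e2: "EE G X2 = \<alpha> * (1 - G \<bullet> G) / u2"
    and m: "m > 0" "u1 \<ge> m" "u2 \<ge> m" and w: "0 \<le> u1 - u2" "u1 - u2 \<le> \<epsilon> * e"
    and th: "\<theta> > 0" "1 - P \<bullet> P \<ge> \<theta>" and nG: "norm G \<le> 1"
    and lin: "linear X2"
    and M: "\<bar>fst (X2 (1,0))\<bar> \<le> M" "\<bar>snd (X2 (1,0))\<bar> \<le> M" "\<bar>fst (X2 (0,1))\<bar> \<le> M" "\<bar>snd (X2 (0,1))\<bar> \<le> M"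
    and psd: "\<And>h. (X1 h - X2 h - \<epsilon> *\<^sub>R ((-2*lam*e) *\<^sub>R h + (4*lam^2*e*(zz \<bullet> h)) *\<^sub>R zz)) \<bullet> h \<ge> 0"
    and dPG: "P - G = \<epsilon> *\<^sub>R ((-2*lam*e) *\<^sub>R zz)"
    and pos: "\<epsilon> > 0" "e > 0" "lam \<ge> 1" and r: "norm zz \<le> 1" "R/2 \<le> norm zz" "R > 0"
    and big: "lam*\<theta>*R^2/4 > 1 + \<bar>\<alpha>\<bar>/(4*m^2) + \<bar>\<alpha>\<bar>/m + 4*M"
  shows False
proof -
  define Xv where "Xv = (\<lambda>h. (-2*lam*e) *\<^sub>R h + (4*lam^2*e*(zz \<bullet> h)) *\<^sub>R zz)"
  define rr where "rr = norm zz"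
  have M0: "M \<ge> 0" using M(1) by linarith
  have PP: "P \<bullet> P \<le> 1" "P \<bullet> P \<ge> 0" using th by auto
  have nP: "norm P \<le> 1" using PP by (simp add: norm_eq_sqrt_inner)
  have Ypsd: "EE P (\<lambda>h. X1 h - X2 h - \<epsilon> *\<^sub>R Xv h) \<ge> 0"
    by (rule EE_psd) (use psd PP in \<open>auto simp: Xv_def\<close>)
  have Yeq: "EE P (\<lambda>h. X1 h - X2 h - \<epsilon> *\<^sub>R Xv h) = EE P X1 - EE P X2 - \<epsilon> * EE P Xv"
    by (rule EE_lin)
  have nd: "norm (P - G) = \<epsilon> * 2 * lam * e * rr"
    unfolding dPG rr_def using pos by simp
  have B: "EE P X1 - EE G X2 \<le> \<bar>\<alpha>\<bar> * (\<epsilon> * e / m^2 + 2 * norm (P - G) / m)"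
    unfolding e1 e2 by (rule rhs_bound) (use m w nP nG PP in auto)
  have C: "EE G X2 - EE P X2 \<le> 8 * M * norm (P - G)"
    using EE_diff[OF lin M nP nG] by linarith
  have D: "EE P Xv \<ge> 4*lam*e*(lam*\<theta>*(zz \<bullet> zz) - 1)"
    unfolding Xv_def by (rule EE_Xv) (use th pos PP in auto)
  have zz: "zz \<bullet> zz = rr^2" unfolding rr_def by (simp add: power2_norm_eq_inner)
  define K where "K = 4*\<epsilon>*lam*e"
  have K: "K > 0" using pos by (simp add: K_def)
  have "\<epsilon> * (4*lam*e*(lam*\<theta>*rr^2 - 1)) \<le> \<bar>\<alpha>\<bar> * (\<epsilon> * e / m^2 + 2 * (\<epsilon> * 2 * lam * e * rr) / m) + 8 * M * (\<epsilon> * 2 * lam * e * rr)"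
  proof -
    have "\<epsilon> * (4*lam*e*(lam*\<theta>*rr^2 - 1)) \<le> \<epsilon> * EE P Xv"
      using D zz pos by (intro mult_left_mono) auto
    also have "\<dots> \<le> EE P X1 - EE P X2" using Ypsd Yeq by linarith
    also have "\<dots> \<le> \<bar>\<alpha>\<bar> * (\<epsilon> * e / m^2 + 2 * norm (P - G) / m) + 8 * M * norm (P - G)" using B C by linarith
    finally show ?thesis unfolding nd .
  qed
  also have "\<dots> = K * (\<bar>\<alpha>\<bar> / (4 * lam * m^2) + (\<bar>\<alpha>\<bar>/m + 4*M) * rr)"
    unfolding K_def using pos m by (simp add: field_simps)
  finally have "K * (lam*\<theta>*rr^2 - 1) \<le> K * (\<bar>\<alpha>\<bar> / (4 * lam * m^2) + (\<bar>\<alpha>\<bar>/m + 4*M) * rr)"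
    unfolding K_def by (simp add: algebra_simps)
  then have F: "lam*\<theta>*rr^2 - 1 \<le> \<bar>\<alpha>\<bar> / (4 * lam * m^2) + (\<bar>\<alpha>\<bar>/m + 4*M) * rr"
    using K by simp
  have g1: "\<bar>\<alpha>\<bar> / (4 * lam * m^2) \<le> \<bar>\<alpha>\<bar> / (4 * m^2)"
    using pos m by (intro divide_left_mono) (auto simp: mult_pos_pos)
  have g2: "(\<bar>\<alpha>\<bar>/m + 4*M) * rr \<le> \<bar>\<alpha>\<bar>/m + 4*M"
    using r M0 m unfolding rr_def by (intro mult_left_le) auto
  have g3: "lam*\<theta>*R^2/4 \<le> lam*\<theta>*rr^2"
  proof -
    have "(R/2)^2 \<le> rr^2" using r unfolding rr_def by (intro power_mono) auto
    then have "R^2/4 \<le> rr^2" by (simp add: power_divide)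
    then show ?thesis using pos th by (simp add: mult_left_mono)
  qed
  show False using F g1 g2 g3 big by linarith
qed


lemma bar_d1:
  fixes z x :: "real \<times> real"
  shows "((\<lambda>x. exp (-lam * ((x - z) \<bullet> (x - z))) - c) has_derivative
     (\<lambda>h. ((-2*lam*exp (-lam * ((x - z) \<bullet> (x - z)))) *\<^sub>R (x - z)) \<bullet> h)) (at x)"
  apply (rule derivative_eq_intros refl)+
  apply (rule ext)
  apply (simp add: inner_commute algebra_simps)
  done

lemma bar_d2:
  fixes z x :: "real \<times> real"
  shows "((\<lambda>x. (-2*lam*exp (-lam * ((x - z) \<bullet> (x - z)))) *\<^sub>R (x - z)) has_derivative
     (\<lambda>h. (-2*lam*exp (-lam * ((x - z) \<bullet> (x - z)))) *\<^sub>R h + (4*lam^2*exp (-lam * ((x - z) \<bullet> (x - z)))*((x - z) \<bullet> h)) *\<^sub>R (x - z))) (at x)"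
  apply (rule derivative_eq_intros refl)+
  apply (rule ext)
  apply (simp add: inner_commute algebra_simps power2_eq_square)
  done

lemma div_eq:
  fixes g :: "real \<times> real \<Rightarrow> real \<times> real"
  assumes dg: "(g has_derivative X) (at x)" and n: "norm (g x) < 1"
  shows "divergence (\<lambda>q. (1 / sqrt (1 - (norm (g q))\<^sup>2)) *\<^sub>R g q) x
     = (1 - g x \<bullet> g x) * trX X / (sqrt (1 - g x \<bullet> g x))^3 + g x \<bullet> X (g x) / (sqrt (1 - g x \<bullet> g x))^3"
proof -
  define G where "G = g x"
  define W where "W = sqrt (1 - G \<bullet> G)"
  have GG: "G \<bullet> G < 1" using n by (simp add: G_def power2_norm_eq_inner[symmetric] abs_square_less_1)
  have W: "W > 0" using GG by (simp add: W_def)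
  have lin: "linear X" using dg has_derivative_linear by blast
  define DV where "DV = (\<lambda>h. (1 / W) *\<^sub>R X h + ((G \<bullet> X h) / W^3) *\<^sub>R G)"
  have der: "((\<lambda>q. (1 / sqrt (1 - (norm (g q))\<^sup>2)) *\<^sub>R g q) has_derivative DV) (at x)"
  proof -
    have e: "(\<lambda>q. (1 / sqrt (1 - (norm (g q))\<^sup>2)) *\<^sub>R g q) = (\<lambda>q. (1 / sqrt (1 - g q \<bullet> g q)) *\<^sub>R g q)"
      by (simp add: power2_norm_eq_inner)
    show ?thesis unfolding e
      apply (rule derivative_eq_intros dg refl)+
      using GG apply (simp add: G_def)
      apply (rule derivative_eq_intros dg refl)+
      using GG apply (simp add: G_def)
      apply (rule refl)
      apply (rule dg)
      unfolding DV_def W_def G_def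
      apply (rule ext)
      apply (simp add: inner_commute power3_eq_cube divide_simps)
      done
  qed
  have some: "(SOME D. ((\<lambda>q. (1 / sqrt (1 - (norm (g q))\<^sup>2)) *\<^sub>R g q) has_derivative D) (at x)) = DV"
    using der has_derivative_unique by blast
  have dv: "divergence (\<lambda>q. (1 / sqrt (1 - (norm (g q))\<^sup>2)) *\<^sub>R g q) x
     = fst (DV (1,0)) + snd (DV (0,1))"
    unfolding divergence_def some Let_def by simp
  have Gs: "G = fst G *\<^sub>R (1,0) + snd G *\<^sub>R (0,1)" by (cases G) simp
  have XG: "X G = fst G *\<^sub>R X (1,0) + snd G *\<^sub>R X (0,1)"
  proof -
    have "X (fst G *\<^sub>R (1,0) + snd G *\<^sub>R (0,1)) = fst G *\<^sub>R X (1,0) + snd G *\<^sub>R X (0,1)"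
      by (simp only: linear_add[OF lin] linear_cmul[OF lin])
    then show ?thesis using Gs by metis
  qed
  have W2: "W^2 = 1 - G \<bullet> G" using GG by (simp add: W_def)
  have W3: "W^3 = W * (1 - G \<bullet> G)" using W2 by (simp add: power3_eq_cube power2_eq_square)
  have "fst (DV (1,0)) + snd (DV (0,1)) = (1 - G \<bullet> G) * trX X / W^3 + G \<bullet> X G / W^3"
  proof -
    have a: "fst (DV (1,0)) + snd (DV (0,1)) = (1/W) * trX X + (fst G * (G \<bullet> X (1,0)) + snd G * (G \<bullet> X (0,1))) / W^3"
      unfolding DV_def trX_def by (simp add: add_divide_distrib mult.commute)
    have b: "G \<bullet> X G = fst G * (G \<bullet> X (1,0)) + snd G * (G \<bullet> X (0,1))"
      unfolding XG by (simp add: inner_add_right)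
    have c: "(1/W) * trX X = (1 - G \<bullet> G) * trX X / W^3"
      unfolding W3 using W GG by (simp add: field_simps)
    show ?thesis unfolding a b c by (simp add: add_divide_distrib)
  qed
  then show ?thesis unfolding dv W_def G_def .
qed
lemma hess_min:
  fixes f :: "real \<times> real \<Rightarrow> real" and G :: "real \<times> real \<Rightarrow> real \<times> real"
  assumes S: "open S" "x0 \<in> S"
    and df: "\<And>x. x \<in> S \<Longrightarrow> (f has_derivative (\<lambda>h. G x \<bullet> h)) (at x)"
    and dG: "(G has_derivative Y) (at x0)"
    and mn: "\<And>x. x \<in> S \<Longrightarrow> f x0 \<le> f x"
  shows "G x0 = 0" "Y h \<bullet> h \<ge> 0"
proof -
  have ev: "eventually (\<lambda>y. f x0 \<le> f y) (at x0)"
    using S mn by (metis eventually_at_topological)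
  have "(\<lambda>h. G x0 \<bullet> h) = (\<lambda>h. 0)"
    by (rule has_derivative_local_min[OF df[OF S(2)] ev])
  then have "G x0 \<bullet> G x0 = 0" by metis
  then show G0: "G x0 = 0" by simp
  show "Y h \<bullet> h \<ge> 0"
  proof (rule ccontr)
    assume neg: "\<not> Y h \<bullet> h \<ge> 0"
    have "((\<lambda>t. G (x0 + t *\<^sub>R h) \<bullet> h) has_real_derivative (Y h \<bullet> h)) (at 0)"
    proof -
      have l: "((\<lambda>t. x0 + t *\<^sub>R h) has_derivative (\<lambda>t. t *\<^sub>R h)) (at 0)"
        by (auto intro!: derivative_eq_intros)
      have "(G has_derivative Y) (at ((\<lambda>t. x0 + t *\<^sub>R h) 0))" using dG by simp
      from has_derivative_compose[OF l this]
      have "((\<lambda>t. G (x0 + t *\<^sub>R h)) has_derivative (\<lambda>t. Y (t *\<^sub>R h))) (at 0)" by (simp add: o_def)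
      then have "((\<lambda>t. G (x0 + t *\<^sub>R h) \<bullet> h) has_derivative (\<lambda>t. Y (t *\<^sub>R h) \<bullet> h)) (at 0)"
        by (auto intro!: derivative_eq_intros)
      moreover have "linear Y" using dG has_derivative_linear by blast
      ultimately have "((\<lambda>t. G (x0 + t *\<^sub>R h) \<bullet> h) has_derivative (\<lambda>t. t * (Y h \<bullet> h))) (at 0)"
        by (simp add: linear_cmul)
      moreover have "(\<lambda>t. t * (Y h \<bullet> h)) = (*) (Y h \<bullet> h)" by (auto simp: fun_eq_iff)
      ultimately show ?thesis by (simp add: has_field_derivative_def)
    qed
    from DERIV_neg_dec_right[OF this] neg obtain d where d: "d > 0"
      "\<And>t. t > 0 \<Longrightarrow> t < d \<Longrightarrow> G (x0 + t *\<^sub>R h) \<bullet> h < G (x0 + 0 *\<^sub>R h) \<bullet> h" by force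
    have hne: "h \<noteq> 0" using neg by (auto simp: linear_0[OF has_derivative_linear[OF dG]])
    obtain e where e: "e > 0" "ball x0 e \<subseteq> S" using S openE by blast
    define t where "t = min (d/2) (e / (2 * norm h))"
    have t: "t > 0" "t < d" "t * norm h < e" using d e hne
      by (auto simp: t_def min_def field_simps)
    have inS: "x0 + s *\<^sub>R h \<in> S" if "0 \<le> s" "s \<le> t" for s
    proof -
      have "norm (s *\<^sub>R h) \<le> t * norm h" using that by (simp add: mult_right_mono)
      then have "dist x0 (x0 + s *\<^sub>R h) < e" using t by (simp add: dist_norm)
      then show ?thesis using e by auto
    qed
    have "\<exists>z>0. z < t \<and> f (x0 + t *\<^sub>R h) - f (x0 + 0 *\<^sub>R h) = (t - 0) * (G (x0 + z *\<^sub>R h) \<bullet> h)"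
    proof (rule MVT2)
      show "0 < t" using t by simp
      fix s assume s: "0 \<le> s" "s \<le> t"
      have l: "((\<lambda>t. x0 + t *\<^sub>R h) has_derivative (\<lambda>t. t *\<^sub>R h)) (at s)"
        by (auto intro!: derivative_eq_intros)
      have "(f has_derivative (\<lambda>k. G (x0 + s *\<^sub>R h) \<bullet> k)) (at ((\<lambda>t. x0 + t *\<^sub>R h) s))"
        using df inS s by simp
      from has_derivative_compose[OF l this]
      have "((\<lambda>t. f (x0 + t *\<^sub>R h)) has_derivative (\<lambda>t. G (x0 + s *\<^sub>R h) \<bullet> (t *\<^sub>R h))) (at s)"
        by (simp add: o_def)
      moreover have "(\<lambda>t. t * (G (x0 + s *\<^sub>R h) \<bullet> h)) = (*) (G (x0 + s *\<^sub>R h) \<bullet> h)" by (auto simp: fun_eq_iff)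
      ultimately show "((\<lambda>t. f (x0 + t *\<^sub>R h)) has_real_derivative G (x0 + s *\<^sub>R h) \<bullet> h) (at s)"
        by (simp add: has_field_derivative_def)
    qed
    then obtain z where z: "z > 0" "z < t" "f (x0 + t *\<^sub>R h) - f x0 = t * (G (x0 + z *\<^sub>R h) \<bullet> h)" by auto
    have "G (x0 + z *\<^sub>R h) \<bullet> h < 0" using d(2)[of z] z t G0 by simp
    then have "t * (G (x0 + z *\<^sub>R h) \<bullet> h) < 0" using t by (simp add: mult_pos_neg)
    then have "f (x0 + t *\<^sub>R h) < f x0" using z by linarith
    moreover have "f x0 \<le> f (x0 + t *\<^sub>R h)" using mn inS[of t] t by simp
    ultimately show False by simp
  qed
qed

lemma unpack:
  assumes "alpha_singular_maximal_graph \<alpha> \<Omega> u"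
  obtains g D2 where "open \<Omega>" "\<And>p. p \<in> \<Omega> \<Longrightarrow> (u has_derivative (\<lambda>h. g p \<bullet> h)) (at p)"
    "\<And>p. p \<in> \<Omega> \<Longrightarrow> (g has_derivative D2 p) (at p)" "\<And>v. continuous_on \<Omega> (\<lambda>p. D2 p v)"
    "\<And>p. p \<in> \<Omega> \<Longrightarrow> u p > 0" "\<And>p. p \<in> \<Omega> \<Longrightarrow> norm (g p) < 1"
    "\<And>p. p \<in> \<Omega> \<Longrightarrow> EE (g p) (D2 p) = \<alpha> * (1 - g p \<bullet> g p) / u p"
    "continuous_on \<Omega> u" "continuous_on \<Omega> g"
proof -
  obtain g D2 where o: "open \<Omega>" and gr: "is_gradient_on \<Omega> u g" and d2: "\<forall>p\<in>\<Omega>. (g has_derivative D2 p) (at p)"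
    and c: "\<forall>v. continuous_on \<Omega> (\<lambda>p. D2 p v)" and up: "\<forall>p\<in>\<Omega>. u p > 0" and n: "\<forall>p\<in>\<Omega>. norm (g p) < 1"
    and eq: "\<forall>p\<in>\<Omega>. divergence (\<lambda>q. (1 / sqrt (1 - (norm (g q))\<^sup>2)) *\<^sub>R g q) p
                   = \<alpha> / (u p * sqrt (1 - (norm (g p))\<^sup>2))"
    using assms unfolding alpha_singular_maximal_graph_def by blast
  have EEq: "EE (g p) (D2 p) = \<alpha> * (1 - g p \<bullet> g p) / u p" if p: "p \<in> \<Omega>" for p
  proof -
    define s where "s = 1 - g p \<bullet> g p"
    have s: "s > 0" using n p by (simp add: s_def power2_norm_eq_inner[symmetric] abs_square_less_1)
    have ns: "1 - (norm (g p))\<^sup>2 = s" by (simp add: s_def power2_norm_eq_inner)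
    have "EE (g p) (D2 p) / (sqrt s)^3 = \<alpha> / (u p * sqrt s)"
      using div_eq[OF d2[rule_format, OF p] n[rule_format, OF p]] eq[rule_format, OF p]
      unfolding EE_def ns s_def[symmetric] by (simp add: add_divide_distrib)
    then have "EE (g p) (D2 p) = \<alpha> * (sqrt s)^3 / (u p * sqrt s)"
      using s by (simp add: field_simps)
    also have "\<dots> = \<alpha> * s / u p"
      using s up p by (simp add: power3_eq_cube field_simps)
    finally show ?thesis by (simp add: s_def)
  qed
  have du: "\<And>p. p \<in> \<Omega> \<Longrightarrow> (u has_derivative (\<lambda>h. g p \<bullet> h)) (at p)" using gr unfolding is_gradient_on_def by blast
  have cu: "continuous_on \<Omega> u"
    by (rule has_derivative_continuous_on) (use du in \<open>blast intro: has_derivative_at_withinI\<close>)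
  have cg: "continuous_on \<Omega> g"
    by (rule has_derivative_continuous_on) (use d2 in \<open>blast intro: has_derivative_at_withinI\<close>)
  show ?thesis using that o du d2 c up n EEq cu cg by blast
qed


lemma line_deriv:
  fixes f :: "real \<times> real \<Rightarrow> real"
  assumes "(f has_derivative (\<lambda>h. G \<bullet> h)) (at (a + t *\<^sub>R b))"
  shows "((\<lambda>s. f (a + s *\<^sub>R b)) has_real_derivative (G \<bullet> b)) (at t)"
proof -
  have l: "((\<lambda>s. a + s *\<^sub>R b) has_derivative (\<lambda>s. s *\<^sub>R b)) (at t)"
    by (auto intro!: derivative_eq_intros)
  have "(f has_derivative (\<lambda>h. G \<bullet> h)) (at ((\<lambda>s. a + s *\<^sub>R b) t))" using assms by simp
  from has_derivative_compose[OF l this]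
  have "((\<lambda>s. f (a + s *\<^sub>R b)) has_derivative (\<lambda>s. s * (G \<bullet> b))) (at t)" by (simp add: o_def)
  moreover have "(\<lambda>s. s * (G \<bullet> b)) = (*) (G \<bullet> b)" by (auto simp: fun_eq_iff)
  ultimately show ?thesis by (simp add: has_field_derivative_def)
qed

lemma cont_bound:
  fixes f :: "'a::metric_space \<Rightarrow> real"
  assumes "compact K" "continuous_on K f"
  obtains M where "\<And>x. x \<in> K \<Longrightarrow> \<bar>f x\<bar> \<le> M"
  using continuous_on_compact_bound[OF assms] by (metis real_norm_def)

lemma pos_min:
  fixes f :: "'a::metric_space \<Rightarrow> real"
  assumes "compact K" "K \<noteq> {}" "continuous_on K f" "\<And>x. x \<in> K \<Longrightarrow> f x > 0"
  obtains m where "m > 0" "\<And>x. x \<in> K \<Longrightarrow> f x \<ge> m"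
proof -
  obtain x where "x \<in> K" "\<forall>y\<in>K. f x \<le> f y" using continuous_attains_inf[OF assms(1-3)] by blast
  then show ?thesis using that assms(4) by blast
qed


theorem proposition4p2:
  fixes \<alpha> :: real and \<Omega>1 \<Omega>2 :: "(real \<times> real) set"
    and u1 u2 :: "real \<times> real \<Rightarrow> real" and p :: "real \<times> real"
  assumes "\<alpha> \<noteq> 0"
    and "alpha_singular_maximal_graph \<alpha> \<Omega>1 u1"
    and "alpha_singular_maximal_graph \<alpha> \<Omega>2 u2"
    and "p \<in> \<Omega>1" and "p \<in> \<Omega>2"
    and "u1 p = u2 p"
    and "(u1 has_derivative D) (at p)" and "(u2 has_derivative D) (at p)"
    and "\<exists>r>0. \<forall>q\<in>ball p r. u2 q \<le> u1 q"
  shows "\<exists>V. open V \<and> p \<in> V \<and> V \<subseteq> \<Omega>1 \<inter> \<Omega>2 \<and> (\<forall>q\<in>V. u1 q = u2 q)"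
proof -
  obtain g1 X1 where o1: "open \<Omega>1" and du1: "\<And>p. p \<in> \<Omega>1 \<Longrightarrow> (u1 has_derivative (\<lambda>h. g1 p \<bullet> h)) (at p)"
    and dg1: "\<And>p. p \<in> \<Omega>1 \<Longrightarrow> (g1 has_derivative X1 p) (at p)" and cX1: "\<And>v. continuous_on \<Omega>1 (\<lambda>p. X1 p v)"
    and pu1: "\<And>p. p \<in> \<Omega>1 \<Longrightarrow> u1 p > 0" and n1: "\<And>p. p \<in> \<Omega>1 \<Longrightarrow> norm (g1 p) < 1"
    and E1: "\<And>p. p \<in> \<Omega>1 \<Longrightarrow> EE (g1 p) (X1 p) = \<alpha> * (1 - g1 p \<bullet> g1 p) / u1 p"
    and cu1: "continuous_on \<Omega>1 u1" and cg1: "continuous_on \<Omega>1 g1"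
    using unpack[OF assms(2)] by metis
  obtain g2 X2 where o2: "open \<Omega>2" and du2: "\<And>p. p \<in> \<Omega>2 \<Longrightarrow> (u2 has_derivative (\<lambda>h. g2 p \<bullet> h)) (at p)"
    and dg2: "\<And>p. p \<in> \<Omega>2 \<Longrightarrow> (g2 has_derivative X2 p) (at p)" and cX2: "\<And>v. continuous_on \<Omega>2 (\<lambda>p. X2 p v)"
    and pu2: "\<And>p. p \<in> \<Omega>2 \<Longrightarrow> u2 p > 0" and n2: "\<And>p. p \<in> \<Omega>2 \<Longrightarrow> norm (g2 p) < 1"
    and E2: "\<And>p. p \<in> \<Omega>2 \<Longrightarrow> EE (g2 p) (X2 p) = \<alpha> * (1 - g2 p \<bullet> g2 p) / u2 p"
    and cu2: "continuous_on \<Omega>2 u2" and cg2: "continuous_on \<Omega>2 g2"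
    using unpack[OF assms(3)] by metis
  obtain r0 where r0: "r0 > 0" "\<And>q. q \<in> ball p r0 \<Longrightarrow> u2 q \<le> u1 q" using assms(9) by blast
  define w where "w = (\<lambda>x. u1 x - u2 x)"
  have "open (\<Omega>1 \<inter> \<Omega>2 \<inter> ball p r0)" using o1 o2 by auto
  moreover have "p \<in> \<Omega>1 \<inter> \<Omega>2 \<inter> ball p r0" using assms(4,5) r0 by auto
  ultimately obtain e0 where e0: "e0 > 0" "ball p e0 \<subseteq> \<Omega>1 \<inter> \<Omega>2 \<inter> ball p r0"
    using openE by blast
  define \<rho> where "\<rho> = min (e0/2) 1"
  have \<rho>: "\<rho> > 0" "\<rho> \<le> 1" using e0 by (auto simp: \<rho>_def)
  define K where "K = cball p \<rho>"
  have "cball p \<rho> \<subseteq> ball p e0" using e0 \<rho> unfolding \<rho>_def by (intro cball_subset_ball_iff[THEN iffD2]) auto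
  then have Ksub: "K \<subseteq> \<Omega>1 \<inter> \<Omega>2 \<inter> ball p r0" using e0 unfolding K_def by blast
  have Kc: "compact K" and Kne: "K \<noteq> {}" "p \<in> K" using \<rho> by (auto simp: K_def)
  have w0: "\<And>x. x \<in> K \<Longrightarrow> w x \<ge> 0" using Ksub r0 by (auto simp: w_def)
  have cw: "continuous_on K w" unfolding w_def
    using Ksub by (intro continuous_on_diff continuous_on_subset[OF cu1] continuous_on_subset[OF cu2]) auto
  have bK: "ball p \<rho> \<subseteq> K" unfolding K_def by auto
  obtain m1 where m1: "m1 > 0" "\<And>x. x \<in> K \<Longrightarrow> u1 x \<ge> m1"
    using pos_min[OF Kc Kne(1) continuous_on_subset[OF cu1]] Ksub pu1 by blast
  obtain m2 where m2: "m2 > 0" "\<And>x. x \<in> K \<Longrightarrow> u2 x \<ge> m2"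
    using pos_min[OF Kc Kne(1) continuous_on_subset[OF cu2]] Ksub pu2 by blast
  define m where "m = min m1 m2"
  have m: "m > 0" "\<And>x. x \<in> K \<Longrightarrow> u1 x \<ge> m" "\<And>x. x \<in> K \<Longrightarrow> u2 x \<ge> m"
    using m1 m2 by (auto simp: m_def min_le_iff_disj)
  have cth: "continuous_on K (\<lambda>x. 1 - g1 x \<bullet> g1 x)"
    using Ksub by (intro continuous_intros continuous_on_subset[OF cg1]) auto
  obtain \<theta> where th: "\<theta> > 0" "\<And>x. x \<in> K \<Longrightarrow> 1 - g1 x \<bullet> g1 x \<ge> \<theta>"
  proof (rule pos_min[OF Kc Kne(1) cth])
    fix x assume "x \<in> K"
    then have "norm (g1 x) < 1" using n1 Ksub by blast
    then show "1 - g1 x \<bullet> g1 x > 0" by (simp add: power2_norm_eq_inner[symmetric] abs_square_less_1)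
  qed blast
  have cX2K: "continuous_on K (\<lambda>x. X2 x v)" for v using Ksub by (intro continuous_on_subset[OF cX2]) auto
  obtain Ma where Ma: "\<And>x. x \<in> K \<Longrightarrow> \<bar>fst (X2 x (1,0))\<bar> \<le> Ma"
    using cont_bound[OF Kc continuous_on_fst[OF cX2K]] by blast
  obtain Mb where Mb: "\<And>x. x \<in> K \<Longrightarrow> \<bar>snd (X2 x (1,0))\<bar> \<le> Mb"
    using cont_bound[OF Kc continuous_on_snd[OF cX2K]] by blast
  obtain Mc where Mc: "\<And>x. x \<in> K \<Longrightarrow> \<bar>fst (X2 x (0,1))\<bar> \<le> Mc"
    using cont_bound[OF Kc continuous_on_fst[OF cX2K]] by blast
  obtain Md where Md: "\<And>x. x \<in> K \<Longrightarrow> \<bar>snd (X2 x (0,1))\<bar> \<le> Md"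
    using cont_bound[OF Kc continuous_on_snd[OF cX2K]] by blast
  define M where "M = max (max Ma Mb) (max Mc Md)"
  have M: "\<And>x. x \<in> K \<Longrightarrow> \<bar>fst (X2 x (1,0))\<bar> \<le> M \<and> \<bar>snd (X2 x (1,0))\<bar> \<le> M \<and> \<bar>fst (X2 x (0,1))\<bar> \<le> M \<and> \<bar>snd (X2 x (0,1))\<bar> \<le> M"
    unfolding M_def using Ma Mb Mc Md by (meson max.coboundedI1 max.coboundedI2 order_trans)
  have main: "w z = 0" if z: "z \<in> ball p (\<rho>/2)" for z
  proof (rule ccontr)
    assume wz: "w z \<noteq> 0"
    have zb: "dist p z < \<rho>/2" using z by simp
    have zK: "z \<in> K" using zb bK \<rho> by auto
    have wzp: "w z > 0" using w0[OF zK] wz by simp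
    define Z where "Z = {x \<in> K. w x = 0}"
    have Zc: "closed Z" unfolding Z_def
      using continuous_closed_preimage_constant[OF cw] Kc compact_imp_closed by blast
    have pZ: "p \<in> Z" using assms(6) Kne by (simp add: Z_def w_def)
    obtain q where q: "q \<in> Z" "\<And>y. y \<in> Z \<Longrightarrow> dist z q \<le> dist z y"
      using distance_attains_inf[OF Zc, of z] pZ by blast
    define R where "R = dist z q"
    have zq: "z \<noteq> q" using q(1) wzp Z_def by auto
    have R: "R > 0" using zq by (simp add: R_def)
    have Rp: "R < \<rho>/2" using q(2)[OF pZ] zb by (simp add: R_def dist_commute)
    have inb: "x \<in> ball p \<rho>" if "dist z x \<le> R" for x
      using that Rp zb dist_triangle[of p x z] by simp
    have inK: "x \<in> K" if "dist z x \<le> R" for x using inb[OF that] bK by blast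
    have wpos: "w x > 0" if "dist z x < R" for x
    proof -
      have "x \<notin> Z" using q(2)[of x] that by (auto simp: R_def)
      moreover have xK: "x \<in> K" using inK that by simp
      ultimately have "w x \<noteq> 0" by (simp add: Z_def)
      moreover have "w x \<ge> 0" using w0[OF xK] .
      ultimately show ?thesis by linarith
    qed
    define S where "S = sphere z (R/2)"
    have Sc: "compact S" by (simp add: S_def)
    have Sne: "S \<noteq> {}"
    proof -
      have "z + (R/2, 0) \<in> S" using R by (simp add: S_def dist_norm norm_Pair)
      then show ?thesis by blast
    qed
    have SK: "S \<subseteq> K" using inK R by (auto simp: S_def)
    obtain m0 where m0: "m0 > 0" "\<And>x. x \<in> S \<Longrightarrow> w x \<ge> m0"
      using pos_min[OF Sc Sne continuous_on_subset[OF cw SK]] wpos R by (auto simp: S_def)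
    define C where "C = 1 + \<bar>\<alpha>\<bar>/(4*m^2) + \<bar>\<alpha>\<bar>/m + 4*M"
    define lam where "lam = max 1 (4 * (C + 1) / (\<theta> * R^2))"
    have lam1: "lam \<ge> 1" by (simp add: lam_def)
    have big: "lam*\<theta>*R^2/4 > 1 + \<bar>\<alpha>\<bar>/(4*m^2) + \<bar>\<alpha>\<bar>/m + 4*M"
    proof -
      have tR: "\<theta> * R^2 > 0" using th R by simp
      have "lam \<ge> 4 * (C + 1) / (\<theta> * R^2)" by (simp add: lam_def)
      then have "lam * (\<theta> * R^2) \<ge> 4 * (C + 1)" using tR by (simp add: field_simps)
      then show ?thesis unfolding C_def by (simp add: algebra_simps)
    qed
    define ev where "ev = (\<lambda>x. exp (-lam * ((x - z) \<bullet> (x - z))))"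
    define c where "c = exp (-lam * R^2)"
    define f where "f = (\<lambda>x. w x - m0 * (ev x - c))"
    define A where "A = cball z R - ball z (R/2)"
    have Ac: "compact A" unfolding A_def by (intro compact_diff) auto
    have qA: "q \<in> A" using R by (simp add: A_def R_def)
    have AK: "A \<subseteq> K" using inK by (auto simp: A_def)
    have cf: "continuous_on A f" unfolding f_def ev_def
      by (intro continuous_intros continuous_on_subset[OF cw AK])
    have ev_le: "ev x \<le> 1" for x
      using lam1 by (simp add: ev_def)
    have ev_pos: "ev x > 0" for x by (simp add: ev_def)
    have ev_R: "ev x = c" if "dist z x = R" for x
    proof -
      have "(x - z) \<bullet> (x - z) = R^2" using that by (simp add: power2_norm_eq_inner[symmetric] dist_norm norm_minus_commute)
      then show ?thesis by (simp add: ev_def c_def)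
    qed
    have c0: "c \<ge> 0" by (simp add: c_def)
    have fA: "f y \<ge> 0" if yA: "y \<in> A" for y
    proof -
      obtain x0 where x0: "x0 \<in> A" "\<And>y. y \<in> A \<Longrightarrow> f x0 \<le> f y"
        using continuous_attains_inf[OF Ac _ cf] qA by blast
      have "f x0 \<ge> 0"
      proof (rule ccontr)
        assume neg: "\<not> f x0 \<ge> 0"
        have d1: "dist z x0 \<ge> R/2" "dist z x0 \<le> R" using x0(1) by (auto simp: A_def)
        have ne1: "dist z x0 \<noteq> R/2"
        proof
          assume "dist z x0 = R/2"
          then have "x0 \<in> S" by (simp add: S_def)
          then have "w x0 \<ge> m0" using m0 by blast
          moreover have "m0 * (ev x0 - c) \<le> m0 * 1" using m0 ev_le[of x0] c0 by (intro mult_left_mono) auto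
          ultimately show False using neg by (simp add: f_def)
        qed
        have ne2: "dist z x0 \<noteq> R"
        proof
          assume "dist z x0 = R"
          then have "ev x0 = c" by (rule ev_R)
          then show False using neg w0[OF inK[OF d1(2)]] by (simp add: f_def)
        qed
        define Op where "Op = ball z R - cball z (R/2)"
        have Opo: "open Op" unfolding Op_def by auto
        have x0Op: "x0 \<in> Op" using d1 ne1 ne2 by (simp add: Op_def)
        have OpA: "Op \<subseteq> A" by (auto simp: Op_def A_def)
        have OpK: "Op \<subseteq> \<Omega>1 \<inter> \<Omega>2" using OpA AK Ksub by blast
        define gv where "gv = (\<lambda>x. (-2*lam*ev x) *\<^sub>R (x - z))"
        define Xv where "Xv = (\<lambda>x h. (-2*lam*ev x) *\<^sub>R h + (4*lam^2*ev x*((x - z) \<bullet> h)) *\<^sub>R (x - z))"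
        have df: "(f has_derivative (\<lambda>h. (g1 x - g2 x - m0 *\<^sub>R gv x) \<bullet> h)) (at x)" if "x \<in> Op" for x
        proof -
          have a: "(u1 has_derivative (\<lambda>h. g1 x \<bullet> h)) (at x)" using du1 OpK that by blast
          have b: "(u2 has_derivative (\<lambda>h. g2 x \<bullet> h)) (at x)" using du2 OpK that by blast
          have cc: "((\<lambda>x. ev x - c) has_derivative (\<lambda>h. gv x \<bullet> h)) (at x)"
            unfolding ev_def gv_def by (rule bar_d1)
          have "(f has_derivative (\<lambda>h. g1 x \<bullet> h - g2 x \<bullet> h - m0 * (gv x \<bullet> h))) (at x)"
            unfolding f_def w_def by (intro has_derivative_diff a b has_derivative_mult_right cc)
          then show ?thesis by (simp add: inner_diff_left algebra_simps)
        qed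
        have dG: "((\<lambda>x. g1 x - g2 x - m0 *\<^sub>R gv x) has_derivative (\<lambda>h. X1 x0 h - X2 x0 h - m0 *\<^sub>R Xv x0 h)) (at x0)"
        proof -
          have a: "(g1 has_derivative X1 x0) (at x0)" using dg1 OpK x0Op by blast
          have b: "(g2 has_derivative X2 x0) (at x0)" using dg2 OpK x0Op by blast
          have cc: "(gv has_derivative Xv x0) (at x0)"
            unfolding ev_def gv_def Xv_def by (rule bar_d2)
          show ?thesis by (intro has_derivative_diff a b has_derivative_scaleR_right cc)
        qed
        have mn: "f x0 \<le> f x" if "x \<in> Op" for x using x0(2) OpA that by blast
        have G0: "g1 x0 - g2 x0 - m0 *\<^sub>R gv x0 = 0"
          by (rule hess_min(1)[OF Opo x0Op df dG mn])
        have psd: "(X1 x0 h - X2 x0 h - m0 *\<^sub>R Xv x0 h) \<bullet> h \<ge> 0" for h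
          by (rule hess_min(2)[OF Opo x0Op df dG mn])
        have x0K: "x0 \<in> K" using AK x0 by blast
        have x0W2: "x0 \<in> \<Omega>2" using x0K Ksub by blast
        have x0W1: "x0 \<in> \<Omega>1" using x0K Ksub by blast
        have wx0: "w x0 \<le> m0 * ev x0" using neg m0 c0 by (simp add: f_def algebra_simps)
          (smt (verit) mult_nonneg_nonneg)
        show False
        proof (rule key[where P="g1 x0" and G="g2 x0" and ?X1.0="X1 x0" and ?X2.0="X2 x0" and zz="x0 - z"
              and e="ev x0" and lam=lam and \<epsilon>=m0 and R=R and \<theta>=\<theta> and M=M and m=m
              and ?u1.0="u1 x0" and ?u2.0="u2 x0" and \<alpha>=\<alpha>])
          show "EE (g1 x0) (X1 x0) = \<alpha> * (1 - g1 x0 \<bullet> g1 x0) / u1 x0" using E1 x0W1 by blast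
          show "EE (g2 x0) (X2 x0) = \<alpha> * (1 - g2 x0 \<bullet> g2 x0) / u2 x0" using E2 x0W2 by blast
          show "m > 0" "u1 x0 \<ge> m" "u2 x0 \<ge> m" using m x0K by auto
          show "0 \<le> u1 x0 - u2 x0" using w0[OF x0K] by (simp add: w_def)
          show "u1 x0 - u2 x0 \<le> m0 * ev x0" using wx0 by (simp add: w_def)
          show "\<theta> > 0" "1 - g1 x0 \<bullet> g1 x0 \<ge> \<theta>" using th x0K by auto
          show "norm (g2 x0) \<le> 1" using n2 x0W2 by (simp add: less_imp_le)
          show "linear (X2 x0)" using dg2 x0W2 has_derivative_linear by blast
          show "\<bar>fst (X2 x0 (1,0))\<bar> \<le> M" "\<bar>snd (X2 x0 (1,0))\<bar> \<le> M" "\<bar>fst (X2 x0 (0,1))\<bar> \<le> M" "\<bar>snd (X2 x0 (0,1))\<bar> \<le> M"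
            using M[OF x0K] by auto
          show "(X1 x0 h - X2 x0 h - m0 *\<^sub>R ((-2*lam*ev x0) *\<^sub>R h + (4*lam^2*ev x0*((x0 - z) \<bullet> h)) *\<^sub>R (x0 - z))) \<bullet> h \<ge> 0" for h
            using psd[of h] by (simp add: Xv_def)
          show "g1 x0 - g2 x0 = m0 *\<^sub>R ((-2*lam*ev x0) *\<^sub>R (x0 - z))"
            using G0 by (simp add: gv_def algebra_simps)
          show "m0 > 0" "ev x0 > 0" "lam \<ge> 1" using m0 ev_pos lam1 by auto
          show "norm (x0 - z) \<le> 1" "R/2 \<le> norm (x0 - z)" "R > 0"
            using d1 Rp \<rho> R by (auto simp: dist_norm norm_minus_commute)
          show "lam*\<theta>*R^2/4 > 1 + \<bar>\<alpha>\<bar>/(4*m^2) + \<bar>\<alpha>\<bar>/m + 4*M" by (rule big)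
        qed
      qed
      then show ?thesis using x0(2)[OF yA] by linarith
    qed
    have qK: "q \<in> K" and wq: "w q = 0" using q(1) by (auto simp: Z_def)
    have qb: "q \<in> ball p \<rho>" using inb[of q] by (simp add: R_def)
    have qW: "q \<in> \<Omega>1" "q \<in> \<Omega>2" using qK Ksub by auto
    have dw: "(w has_derivative (\<lambda>h. g1 q \<bullet> h - g2 q \<bullet> h)) (at q)"
      unfolding w_def using du1[OF qW(1)] du2[OF qW(2)] by (rule has_derivative_diff)
    have evq: "eventually (\<lambda>y. w q \<le> w y) (at q)"
    proof -
      have "\<forall>y\<in>ball p \<rho>. w q \<le> w y" using wq w0 bK by auto
      then show ?thesis using qb by (metis eventually_at_topological open_ball)
    qed
    have gq: "g1 q \<bullet> h - g2 q \<bullet> h = 0" for h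
      using has_derivative_local_min[OF dw evq] by metis
    define gv where "gv = (\<lambda>x. (-2*lam*ev x) *\<^sub>R (x - z))"
    have dfq: "(f has_derivative (\<lambda>h. (g1 q - g2 q - m0 *\<^sub>R gv q) \<bullet> h)) (at q)"
    proof -
      have cc: "((\<lambda>x. ev x - c) has_derivative (\<lambda>h. gv q \<bullet> h)) (at q)"
        unfolding ev_def gv_def by (rule bar_d1)
      have "(f has_derivative (\<lambda>h. (g1 q \<bullet> h - g2 q \<bullet> h) - m0 * (gv q \<bullet> h))) (at q)"
        unfolding f_def by (intro has_derivative_diff dw has_derivative_mult_right cc)
      then show ?thesis by (simp add: inner_diff_left algebra_simps)
    qed
    have "((\<lambda>s. f (q + s *\<^sub>R (z - q))) has_real_derivative ((g1 q - g2 q - m0 *\<^sub>R gv q) \<bullet> (z - q))) (at 0)"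
      by (rule line_deriv) (use dfq in simp)
    moreover have "(g1 q - g2 q - m0 *\<^sub>R gv q) \<bullet> (z - q) = - (m0 * (2 * lam * ev q * R^2))"
    proof -
      have "(z - q) \<bullet> (z - q) = R^2" by (simp add: R_def dist_norm power2_norm_eq_inner)
      moreover have "(g1 q - g2 q) \<bullet> (z - q) = 0" using gq[of "z - q"] by (simp add: inner_diff_left)
      moreover have "gv q \<bullet> (z - q) = 2*lam*ev q*R^2"
      proof -
        have "(q - z) \<bullet> (z - q) = - ((z - q) \<bullet> (z - q))"
          by (metis inner_minus_left minus_diff_eq)
        then show ?thesis unfolding gv_def using \<open>(z - q) \<bullet> (z - q) = R^2\<close> by simp
      qed
      ultimately show ?thesis by (simp only: inner_diff_left inner_scaleR_left)
    qed
    ultimately have dphi: "((\<lambda>s. f (q + s *\<^sub>R (z - q))) has_real_derivative - (m0 * (2 * lam * ev q * R^2))) (at 0)"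
      by simp
    have "m0 * (2 * lam * ev q * R^2) > 0" using m0 lam1 ev_pos R by simp
    then obtain d where d: "d > 0" "\<And>h. h > 0 \<Longrightarrow> h < d \<Longrightarrow> f (q + 0 *\<^sub>R (z - q)) > f (q + (0 + h) *\<^sub>R (z - q))"
      using DERIV_neg_dec_right[OF dphi] by force
    define h where "h = min (d/2) (1/2)"
    have h: "h > 0" "h < d" "h \<le> 1/2" using d by (auto simp: h_def)
    have fq: "f q = 0" using wq ev_R[of q] by (simp add: f_def R_def)
    have lt: "f (q + h *\<^sub>R (z - q)) < 0" using d(2)[OF h(1,2)] fq by simp
    have "dist z (q + h *\<^sub>R (z - q)) = (1 - h) * R"
    proof -
      have "z - (q + h *\<^sub>R (z - q)) = (1 - h) *\<^sub>R (z - q)" by (simp add: algebra_simps)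
      then show ?thesis using h by (simp add: dist_norm R_def)
    qed
    moreover have "h * R \<le> (1/2) * R" using h R by (intro mult_right_mono) auto
    moreover have "h * R \<ge> 0" using h R by simp
    ultimately have "dist z (q + h *\<^sub>R (z - q)) \<le> R" "\<not> dist z (q + h *\<^sub>R (z - q)) < R/2"
      by (simp_all add: algebra_simps)
    then have "q + h *\<^sub>R (z - q) \<in> A" by (simp add: A_def)
    then show False using fA[of "q + h *\<^sub>R (z - q)"] lt by linarith
  qed
  have "ball p (\<rho>/2) \<subseteq> ball p \<rho>" using \<rho> by (intro subset_ball) auto
  then have "ball p (\<rho>/2) \<subseteq> \<Omega>1 \<inter> \<Omega>2" using bK Ksub by blast
  moreover have "\<forall>q\<in>ball p (\<rho>/2). u1 q = u2 q" using main by (simp add: w_def)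
  moreover have "p \<in> ball p (\<rho>/2)" using \<rho> by simp
  ultimately show ?thesis by blast
qed

end
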